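(* Let $\mathbb P$ be the law of a stationary simple point process on $\mathbb R^d$ with finite positive intensity $m$, and let $\gamma>0$. The following are equivalent: (i) $\mathbb E_0[\xi(\Lambda_L(z))^\gamma]<\infty$ for every $L>0$ and $z\in\mathbb R^d$; (ii) $\rho_{1+\gamma}<\infty$.
   Context: $\mathcal N$ = locally finite subsets of $\mathbb R^d$, identified with counting measures ($\xi(A)=\#(\xi\cap A)$); $\tau_x\xi=\xi-x$; stationarity: $\mathbb P(\tau_xA)=\mathbb P(A)$. Intensity $m=\mathbb E[\xi([0,1]^d)]$. $\Lambda_L(z)=z+[-L,L]^d$. $\rho_\gamma:=\mathbb E[\xi([0,1]^d)^\gamma]$. Palm distribution $\mathbb P_0(A)=\frac1m\int d\mathbb P(\xi)\sum_{x\in\xi\cap[0,1]^d}\mathbf 1_A(\tau_x\xi)$, expectation $\mathbb E_0$. *)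

theory Defs
  imports "HOL-Probability.Probability"
begin

definition loc_finite_configs :: "'a::euclidean_space set set" where
  "loc_finite_configs = {\<xi>. \<forall>K. compact K \<longrightarrow> finite (\<xi> \<inter> K)}"

definition npts :: "'a set \<Rightarrow> 'a set \<Rightarrow> nat" where
  "npts \<xi> A = card (\<xi> \<inter> A)"

definition config_space :: "'a::euclidean_space set measure" where
  "config_space = sigma loc_finite_configs
     {{\<xi>\<in>loc_finite_configs. npts \<xi> B = k} | B k. B \<in> sets borel \<and> bounded B}"

definition shift :: "'a::euclidean_space \<Rightarrow> 'a set \<Rightarrow> 'a set" where
  "shift x \<xi> = (\<lambda>y. y - x) ` \<xi>"

definition unit_cube :: "'a::euclidean_space set" where
  "unit_cube = cbox 0 One"

definition Lambda_box :: "real \<Rightarrow> 'a::euclidean_space \<Rightarrow> 'a set" where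
  "Lambda_box L z = cbox (z - L *\<^sub>R One) (z + L *\<^sub>R One)"

definition stationary :: "'a::euclidean_space set measure \<Rightarrow> bool" where
  "stationary P \<longleftrightarrow> (\<forall>x. \<forall>A\<in>sets P. emeasure P (shift x ` A) = emeasure P A)"

definition intensity :: "'a::euclidean_space set measure \<Rightarrow> ennreal" where
  "intensity P = (\<integral>\<^sup>+ \<xi>. ennreal (real (npts \<xi> unit_cube)) \<partial>P)"

definition rho :: "'a::euclidean_space set measure \<Rightarrow> real \<Rightarrow> ennreal" where
  "rho P g = (\<integral>\<^sup>+ \<xi>. ennreal (real (npts \<xi> unit_cube) powr g) \<partial>P)"

definition palm_expectation ::
  "'a::euclidean_space set measure \<Rightarrow> ('a set \<Rightarrow> ennreal) \<Rightarrow> ennreal" where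
  "palm_expectation P f =
     (\<integral>\<^sup>+ \<xi>. (\<Sum>x\<in>\<xi> \<inter> unit_cube. f (shift x \<xi>)) \<partial>P) / intensity P"

end

theory Submission
  imports Defs
begin

abbreviation "\<Omega> \<equiv> loc_finite_configs"

lemma space_cs: "space config_space = loc_finite_configs"
  unfolding config_space_def by (rule space_measure_of_conv)

lemma gen_sets:
  assumes "B \<in> sets borel" "bounded B"
  shows "{\<xi>\<in>loc_finite_configs. npts \<xi> B = k} \<in> sets config_space"
proof -
  have "{\<xi>\<in>loc_finite_configs. npts \<xi> B = k} \<in> {{\<xi>\<in>loc_finite_configs. npts \<xi> B = k} | B k. B \<in> sets borel \<and> bounded B}"
    using assms by blast
  moreover have "{{\<xi>\<in>loc_finite_configs. npts \<xi> B = k} | B k. B \<in> sets borel \<and> bounded (B::'a set)} \<subseteq> Pow loc_finite_configs"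
    by blast
  ultimately show ?thesis unfolding config_space_def
    by (subst sets_measure_of) (auto intro: sigma_sets.Basic)
qed

lemma npts_meas:
  assumes "B \<in> sets borel" "bounded B"
  shows "(\<lambda>\<xi>. npts \<xi> B) \<in> measurable config_space (count_space UNIV)"
  unfolding measurable_count_space_eq2_countable
proof (intro conjI ballI)
  fix k :: nat
  have "(\<lambda>\<xi>. npts \<xi> B) -` {k} \<inter> space config_space = {\<xi>\<in>loc_finite_configs. npts \<xi> B = k}"
    by (auto simp: space_cs)
  then show "(\<lambda>\<xi>. npts \<xi> B) -` {k} \<inter> space config_space \<in> sets config_space"
    using gen_sets[OF assms] by simp
qed auto

lemma lf_finite: "\<xi> \<in> loc_finite_configs \<Longrightarrow> compact K \<Longrightarrow> finite (\<xi> \<inter> K)"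
  unfolding loc_finite_configs_def by auto

lemma shift_Int: "shift x \<xi> \<inter> A = (\<lambda>y. y - x) ` (\<xi> \<inter> (\<lambda>y. y + x) ` A)"
  unfolding shift_def by force

lemma npts_shift: "npts (shift x \<xi>) A = npts \<xi> ((\<lambda>y. y + x) ` A)"
  unfolding npts_def shift_Int by (rule card_image) (auto simp: inj_on_def)

lemma shift_lf: assumes "\<xi> \<in> loc_finite_configs" shows "shift x \<xi> \<in> loc_finite_configs"
  unfolding loc_finite_configs_def
proof (intro CollectI allI impI)
  fix K :: "'a set" assume "compact K"
  then have "compact ((\<lambda>y. y + x) ` K)"
    by (intro compact_continuous_image) (auto intro!: continuous_intros)
  then show "finite (shift x \<xi> \<inter> K)" unfolding shift_Int using lf_finite[OF assms] by auto
qed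

lemma shift_shift: "shift x (shift (-x) \<eta>) = \<eta>"
  unfolding shift_def by (auto simp: image_image)

lemma trans_cbox: "(\<lambda>y. y + k) ` cbox a b = cbox (a + k) (b + k)"
  using cbox_translation[of k a b] by (simp add: add.commute)

lemma stat_distr:
  assumes sP: "sets P = sets config_space" and spP: "space P = space config_space"
    and st: "stationary P"
  shows "distr P (count_space UNIV) (\<lambda>\<xi>. npts \<xi> (cbox k (k + One)))
       = distr P (count_space UNIV) (\<lambda>\<xi>. npts \<xi> (cbox (0::'a::euclidean_space) One))"
proof (rule measure_eqI_countable)
  fix n :: nat
  have mk: "(\<lambda>\<xi>. npts \<xi> (cbox k (k + One))) \<in> measurable P (count_space UNIV)"
    using npts_meas[of "cbox k (k + One)"] by (simp add: measurable_def sP spP)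
  have m0: "(\<lambda>\<xi>. npts \<xi> (cbox (0::'a) One)) \<in> measurable P (count_space UNIV)"
    using npts_meas[of "cbox (0::'a) One"] by (simp add: measurable_def sP spP)
  define A where "A = {\<xi>\<in>loc_finite_configs. npts \<xi> (cbox k (k + One)) = n}"
  have A: "A \<in> sets P" unfolding A_def sP by (rule gen_sets) auto
  have img: "shift k ` A = {\<xi>\<in>loc_finite_configs. npts \<xi> (cbox 0 One) = n}"
  proof (intro equalityI subsetI)
    fix \<zeta> assume "\<zeta> \<in> shift k ` A"
    then obtain \<xi> where "\<xi> \<in> A" "\<zeta> = shift k \<xi>" by auto
    then show "\<zeta> \<in> {\<xi>\<in>loc_finite_configs. npts \<xi> (cbox 0 One) = n}"
      unfolding A_def by (auto simp: shift_lf npts_shift trans_cbox add.commute)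
  next
    fix \<eta> :: "'a set" assume "\<eta> \<in> {\<xi>\<in>loc_finite_configs. npts \<xi> (cbox 0 One) = n}"
    then have h: "\<eta> \<in> loc_finite_configs" "npts \<eta> (cbox 0 One) = n" by auto
    have "npts \<eta> (cbox 0 One) = npts (shift k (shift (-k) \<eta>)) (cbox 0 One)"
      by (simp only: shift_shift)
    also have "\<dots> = npts (shift (-k) \<eta>) (cbox k (k + One))"
      by (simp only: npts_shift trans_cbox) (simp add: add.commute)
    finally have "shift (-k) \<eta> \<in> A" unfolding A_def
      using h shift_lf[OF h(1), of "-k"] by simp
    then show "\<eta> \<in> shift k ` A" using shift_shift[of k \<eta>] by force
  qed
  have "emeasure (distr P (count_space UNIV) (\<lambda>\<xi>. npts \<xi> (cbox k (k + One)))) {n} = emeasure P A"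
    using mk by (subst emeasure_distr) (auto simp: A_def spP space_cs intro!: arg_cong[where f="emeasure P"])
  also have "\<dots> = emeasure P (shift k ` A)" using st A unfolding stationary_def by auto
  also have "\<dots> = emeasure (distr P (count_space UNIV) (\<lambda>\<xi>. npts \<xi> (cbox (0::'a) One))) {n}"
    using m0 by (subst emeasure_distr) (auto simp: img spP space_cs intro!: arg_cong[where f="emeasure P"])
  finally show "emeasure (distr P (count_space UNIV) (\<lambda>\<xi>. npts \<xi> (cbox k (k + One)))) {n} =
      emeasure (distr P (count_space UNIV) (\<lambda>\<xi>. npts \<xi> (cbox (0::'a) One))) {n}" .
qed auto

lemma stat_int:
  assumes sP: "sets P = sets config_space" and spP: "space P = space config_space"
    and st: "stationary P"
  shows "(\<integral>\<^sup>+\<xi>. h (npts \<xi> (cbox k (k + One))) \<partial>P) = (\<integral>\<^sup>+\<xi>. h (npts \<xi> (cbox (0::'a::euclidean_space) One)) \<partial>P)"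
proof -
  have mk: "(\<lambda>\<xi>. npts \<xi> (cbox k (k + One))) \<in> measurable P (count_space UNIV)"
    using npts_meas[of "cbox k (k + One)"] by (simp add: measurable_def sP spP)
  have m0: "(\<lambda>\<xi>. npts \<xi> (cbox (0::'a) One)) \<in> measurable P (count_space UNIV)"
    using npts_meas[of "cbox (0::'a) One"] by (simp add: measurable_def sP spP)
  show ?thesis
    using nn_integral_distr[OF mk, of h] nn_integral_distr[OF m0, of h] stat_distr[OF assms, of k]
    by simp
qed

lemma cover_cubes:
  fixes B :: "'a::euclidean_space set"
  assumes "compact B"
  obtains K where "finite K" "B \<subseteq> (\<Union>k\<in>K. cbox k (k + One))"
proof -
  define h :: real where "h = 1/2"
  have "B \<subseteq> (\<Union>y\<in>B. box (y - h *\<^sub>R One) (y + h *\<^sub>R One))"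
  proof
    fix y assume "y \<in> B"
    moreover have "y \<in> box (y - h *\<^sub>R One) (y + h *\<^sub>R One)"
      by (auto simp: mem_box h_def inner_diff_left inner_add_left)
    ultimately show "y \<in> (\<Union>y\<in>B. box (y - h *\<^sub>R One) (y + h *\<^sub>R One))" by blast
  qed
  then obtain T where T: "T \<subseteq> B" "finite T" "B \<subseteq> (\<Union>y\<in>T. box (y - h *\<^sub>R One) (y + h *\<^sub>R One))"
    using compactE_image[OF assms, of B "\<lambda>y. box (y - h *\<^sub>R One) (y + h *\<^sub>R One)"] by blast
  have eq: "y + h *\<^sub>R One = (y - h *\<^sub>R One) + One" for y :: 'a
    by (simp add: h_def algebra_simps scaleR_2 flip: scaleR_add_left)
  show ?thesis
  proof (rule that[of "(\<lambda>y. y - h *\<^sub>R One) ` T"])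
    show "finite ((\<lambda>y. y - h *\<^sub>R One) ` T)" using T by auto
    show "B \<subseteq> (\<Union>k\<in>(\<lambda>y. y - h *\<^sub>R One) ` T. cbox k (k + One))"
      using T(3) box_subset_cbox eq by fastforce
  qed
qed

lemma mult_powr_self: "(x::real) \<ge> 0 \<Longrightarrow> x * x powr g = x powr (1 + g)"
  by (cases "x = 0") (auto simp: powr_add)

lemma young_ish:
  fixes a b g :: real assumes "a \<ge> 0" "b \<ge> 0" "g > 0"
  shows "a * b powr g \<le> a powr (1 + g) + b powr (1 + g)"
proof (cases "a \<le> b")
  case True
  then have "a * b powr g \<le> b * b powr g" by (intro mult_right_mono) auto
  then show ?thesis using mult_powr_self[OF assms(2)] by (simp add: add_increasing)
next
  case False
  then have "a * b powr g \<le> a * a powr g"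
    using assms by (intro mult_left_mono powr_mono2) auto
  then show ?thesis using mult_powr_self[OF assms(1)] by (simp add: add_increasing2)
qed

lemma sum_powr_bound:
  fixes a :: "'k \<Rightarrow> real" and b p :: real
  assumes "finite K" "K \<noteq> {}" "\<And>k. k \<in> K \<Longrightarrow> a k \<ge> 0" "0 \<le> b" "b \<le> sum a K" "p > 0"
  shows "b powr p \<le> real (card K) powr p * (\<Sum>k\<in>K. a k powr p)"
proof -
  define M where "M = Max (a ` K)"
  have MK: "M \<in> a ` K" unfolding M_def using assms by auto
  have aM: "a k \<le> M" if "k \<in> K" for k unfolding M_def using assms that by auto
  have "sum a K \<le> real (card K) * M" using sum_bounded_above[of K a M] aM by auto
  then have "b powr p \<le> (real (card K) * M) powr p"
    using assms by (intro powr_mono2) auto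
  also have "\<dots> = real (card K) powr p * M powr p"
    using MK assms by (subst powr_mult) auto
  also have "M powr p \<le> (\<Sum>k\<in>K. a k powr p)"
    using MK assms by (auto intro!: member_le_sum)
  then have "real (card K) powr p * M powr p \<le> real (card K) powr p * (\<Sum>k\<in>K. a k powr p)"
    by (intro mult_left_mono) auto
  finally show ?thesis .
qed

lemma lower_cnt:
  assumes "\<xi> \<in> loc_finite_configs" "x \<in> unit_cube"
  shows "npts \<xi> unit_cube \<le> npts (shift x \<xi>) (Lambda_box 1 (0::'a::euclidean_space))"
proof -
  have e: "(\<lambda>y. y + x) ` Lambda_box 1 0 = cbox (x - One) (x + One)"
    unfolding Lambda_box_def trans_cbox by (simp add: algebra_simps)
  have "unit_cube \<subseteq> cbox (x - One) (x + (One::'a))"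
    using assms(2) unfolding unit_cube_def
    by (auto simp: mem_box inner_diff_left inner_add_left) (smt (verit))+
  then show ?thesis unfolding npts_shift e unfolding npts_def
    by (intro card_mono lf_finite[OF assms(1)]) auto
qed

lemma lower_pt:
  assumes "\<xi> \<in> loc_finite_configs" "\<gamma> > 0"
  shows "ennreal (real (npts \<xi> unit_cube) powr (1+\<gamma>))
     \<le> (\<Sum>x\<in>\<xi> \<inter> unit_cube. ennreal (real (npts (shift x \<xi>) (Lambda_box 1 (0::'a::euclidean_space))) powr \<gamma>))"
proof -
  have "of_nat (card (\<xi> \<inter> unit_cube)) * ennreal (real (npts \<xi> unit_cube) powr \<gamma>)
      \<le> (\<Sum>x\<in>\<xi> \<inter> unit_cube. ennreal (real (npts (shift x \<xi>) (Lambda_box 1 (0::'a))) powr \<gamma>))"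
    using lower_cnt[OF assms(1)] assms(2)
    by (intro sum_bounded_below ennreal_leI powr_mono2) auto
  moreover have "of_nat (card (\<xi> \<inter> unit_cube)) * ennreal (real (npts \<xi> unit_cube) powr \<gamma>)
     = ennreal (real (npts \<xi> unit_cube) powr (1+\<gamma>))"
    unfolding ennreal_of_nat_eq_real_of_nat
    by (subst ennreal_mult[symmetric]) (auto simp: mult_powr_self npts_def)
  ultimately show ?thesis by simp
qed

lemma upper_pt:
  fixes S :: "'a::euclidean_space set"
  assumes xi: "\<xi> \<in> loc_finite_configs" and g: "\<gamma> > 0" and K: "finite K" "K \<noteq> {}"
    and cov: "\<And>x. x \<in> unit_cube \<Longrightarrow> (\<lambda>y. y + x) ` S \<subseteq> (\<Union>k\<in>K. cbox k (k + One))"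
  shows "(\<Sum>x\<in>\<xi> \<inter> unit_cube. ennreal (real (npts (shift x \<xi>) S) powr \<gamma>))
     \<le> ennreal (real (npts \<xi> unit_cube) powr (1+\<gamma>))
       + ennreal (real (card K) powr (1+\<gamma>)) * (\<Sum>k\<in>K. ennreal (real (npts \<xi> (cbox k (k + One))) powr (1+\<gamma>)))"
proof -
  define b where "b = (\<Sum>k\<in>K. npts \<xi> (cbox k (k + One)))"
  define a0 where "a0 = npts \<xi> unit_cube"
  have cnt: "npts (shift x \<xi>) S \<le> b" if "x \<in> unit_cube" for x
  proof -
    have "npts (shift x \<xi>) S \<le> card (\<Union>k\<in>K. \<xi> \<inter> cbox k (k + One))"
      unfolding npts_shift unfolding npts_def
    proof (rule card_mono)
      show "finite (\<Union>k\<in>K. \<xi> \<inter> cbox k (k + One))"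
        by (rule finite_UN_I[OF K(1)], rule lf_finite[OF xi], rule compact_cbox)
    qed (use cov[OF that] in auto)
    also have "\<dots> \<le> b" unfolding b_def npts_def using K by (intro card_UN_le) auto
    finally show ?thesis .
  qed
  have "(\<Sum>x\<in>\<xi> \<inter> unit_cube. ennreal (real (npts (shift x \<xi>) S) powr \<gamma>))
      \<le> of_nat (card (\<xi> \<inter> unit_cube)) * ennreal (real b powr \<gamma>)"
    using cnt g by (intro sum_bounded_above ennreal_leI powr_mono2) auto
  also have "\<dots> = ennreal (real a0 * real b powr \<gamma>)"
    unfolding ennreal_of_nat_eq_real_of_nat a0_def npts_def by (subst ennreal_mult) auto
  also have "\<dots> \<le> ennreal (real a0 powr (1+\<gamma>) + real b powr (1+\<gamma>))"
    using g by (intro ennreal_leI young_ish) auto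
  also have "\<dots> \<le> ennreal (real a0 powr (1+\<gamma>) + real (card K) powr (1+\<gamma>) * (\<Sum>k\<in>K. real (npts \<xi> (cbox k (k + One))) powr (1+\<gamma>)))"
    using g K by (intro ennreal_leI add_left_mono sum_powr_bound) (auto simp: b_def sum_nonneg)
  also have "\<dots> = ennreal (real a0 powr (1+\<gamma>))
       + ennreal (real (card K) powr (1+\<gamma>)) * (\<Sum>k\<in>K. ennreal (real (npts \<xi> (cbox k (k + One))) powr (1+\<gamma>)))"
    by (simp add: ennreal_mult sum_nonneg)
  finally show ?thesis unfolding a0_def .
qed

lemma meas_pow:
  assumes sP: "sets P = sets config_space" and spP: "space P = space config_space"
  shows "(\<lambda>\<xi>. ennreal (real (npts \<xi> (cbox a (b::'a::euclidean_space))) powr p)) \<in> borel_measurable P"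
proof -
  have m: "(\<lambda>\<xi>. npts \<xi> (cbox a b)) \<in> measurable P (count_space UNIV)"
    using npts_meas[of "cbox a b"] by (simp add: measurable_def sP spP)
  have "(\<lambda>n::nat. ennreal (real n powr p)) \<in> measurable (count_space UNIV) borel" by simp
  from measurable_compose[OF m this] show ?thesis .
qed

theorem lemma8p3:
  fixes P :: "'a::euclidean_space set measure" and \<gamma> :: real
  assumes "prob_space P"
    and "sets P = sets config_space" and "space P = space config_space"
    and "stationary P"
    and "0 < intensity P" and "intensity P < \<infinity>"
    and "0 < \<gamma>"
  shows "(\<forall>L>0. \<forall>z. palm_expectation P
             (\<lambda>\<xi>. ennreal (real (npts \<xi> (Lambda_box L z)) powr \<gamma>)) < \<infinity>)
         \<longleftrightarrow> rho P (1 + \<gamma>) < \<infinity>"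
proof -
  note sP = assms(2) and spP = assms(3) and st = assms(4) and g = assms(7)
  have spO: "space P = loc_finite_configs" using spP space_cs by simp
  define m where "m = intensity P"
  have m0: "m \<noteq> 0" and mt: "m \<noteq> \<infinity>" using assms(5,6) by (auto simp: m_def)
  have div: "(I::ennreal) / m < \<infinity> \<longleftrightarrow> I < \<infinity>" for I
    using m0 mt ennreal_divide_eq_top_iff[of I m] by (simp add: top.not_eq_extremum[symmetric])
  have rho_eq: "rho P (1+\<gamma>) = (\<integral>\<^sup>+\<xi>. ennreal (real (npts \<xi> (cbox 0 One)) powr (1+\<gamma>)) \<partial>P)"
    unfolding rho_def unit_cube_def ..
  show ?thesis
  proof
    assume H: "\<forall>L>0. \<forall>z. palm_expectation P
             (\<lambda>\<xi>. ennreal (real (npts \<xi> (Lambda_box L z)) powr \<gamma>)) < \<infinity>"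
    define I where "I = (\<integral>\<^sup>+ \<xi>. (\<Sum>x\<in>\<xi> \<inter> unit_cube. ennreal (real (npts (shift x \<xi>) (Lambda_box 1 (0::'a))) powr \<gamma>)) \<partial>P)"
    have "I / m < \<infinity>" using H[rule_format, of 1 0] unfolding palm_expectation_def I_def m_def by simp
    then have "I < \<infinity>" using div by simp
    moreover have "rho P (1+\<gamma>) \<le> I"
      unfolding rho_def I_def using lower_pt[OF _ g] spO
      by (intro nn_integral_mono) auto
    ultimately show "rho P (1+\<gamma>) < \<infinity>" by simp
  next
    assume R: "rho P (1+\<gamma>) < \<infinity>"
    show "\<forall>L>0. \<forall>z. palm_expectation P
             (\<lambda>\<xi>. ennreal (real (npts \<xi> (Lambda_box L z)) powr \<gamma>)) < \<infinity>"
    proof (intro allI impI)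
      fix L :: real and z :: 'a assume "L > 0"
      define B where "B = Lambda_box (L+1) z"
      have "compact B" unfolding B_def Lambda_box_def by simp
      then obtain K0 where K0: "finite K0" "B \<subseteq> (\<Union>k\<in>K0. cbox k (k + One))"
        by (rule cover_cubes)
      define K where "K = insert 0 K0"
      have K: "finite K" "K \<noteq> {}" using K0 by (auto simp: K_def)
      have cov: "(\<lambda>y. y + x) ` Lambda_box L z \<subseteq> (\<Union>k\<in>K. cbox k (k + One))" if "x \<in> unit_cube" for x
      proof -
        have "(\<lambda>y. y + x) ` Lambda_box L z \<subseteq> B"
          using that unfolding B_def Lambda_box_def unit_cube_def
          by (auto simp: mem_box inner_diff_left inner_add_left algebra_simps) (smt (verit))+
        then show ?thesis using K0 by (auto simp: K_def)
      qed
      define c where "c = ennreal (real (card K) powr (1+\<gamma>))"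
      define I where "I = (\<integral>\<^sup>+ \<xi>. (\<Sum>x\<in>\<xi> \<inter> unit_cube. ennreal (real (npts (shift x \<xi>) (Lambda_box L z)) powr \<gamma>)) \<partial>P)"
      have "I \<le> (\<integral>\<^sup>+ \<xi>. ennreal (real (npts \<xi> (cbox 0 One)) powr (1+\<gamma>))
           + c * (\<Sum>k\<in>K. ennreal (real (npts \<xi> (cbox k (k + One))) powr (1+\<gamma>))) \<partial>P)"
        unfolding I_def c_def using upper_pt[OF _ g K cov] spO
        by (intro nn_integral_mono) (auto simp: unit_cube_def)
      also have "\<dots> = rho P (1+\<gamma>) + c * (\<Sum>k\<in>K. (\<integral>\<^sup>+ \<xi>. ennreal (real (npts \<xi> (cbox k (k + One))) powr (1+\<gamma>)) \<partial>P))"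
        using meas_pow[OF sP spP] K(1)
        apply (subst nn_integral_add)
          apply (auto intro!: borel_measurable_sum borel_measurable_times simp del: sum_ennreal)[2]
        apply (subst nn_integral_cmult)
         apply (auto intro!: borel_measurable_sum simp del: sum_ennreal)[1]
        apply (subst nn_integral_sum)
         apply (auto simp del: sum_ennreal simp: rho_eq)
        done
      also have "\<dots> = rho P (1+\<gamma>) + c * (\<Sum>k\<in>K. rho P (1+\<gamma>))"
        using stat_int[OF sP spP st, of "\<lambda>n. ennreal (real n powr (1+\<gamma>))"]
        by (intro arg_cong2[where f="(+)"] arg_cong2[where f="(*)"] refl sum.cong) (simp_all add: rho_eq)
      also have "\<dots> < \<infinity>" using R
        by (simp add: c_def ennreal_mult_less_top of_nat_less_top)
      finally have "I < \<infinity>" .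
      then show "palm_expectation P (\<lambda>\<xi>. ennreal (real (npts \<xi> (Lambda_box L z)) powr \<gamma>)) < \<infinity>"
        using div unfolding palm_expectation_def I_def m_def by simp
    qed
  qed
qed

end
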